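(* Let $X \subseteq 2^\omega$ be nice. Then for every Borel function $x \mapsto \langle Y^x, f^x\rangle$ from $2^\omega$ to $[\omega]^\omega \times \omega^\omega$ there exists $g \in \omega^\omega$ such that for every $x \in X$ there are infinitely many $n \in Y^x$ with $f^x(n) = g(n)$.
   Context: $[\omega]^\omega$ denotes the set of infinite subsets of $\omega$, viewed as a subspace of $2^\omega$. A set $X \subseteq 2^\omega$ is nice if for every Borel function $x \mapsto f^x$ from $2^\omega$ to $\omega^\omega$ there exists $g \in \omega^\omega$ such that for every $x \in X$ there are infinitely many $n$ with $f^x(n) = g(n)$. *)

theory Defs
  imports "HOL-Analysis.Analysis"
begin

text \<open>Cantor space 2^omega is modelled as the type nat \<Rightarrow> bool and Baire space
omega^omega as nat \<Rightarrow> nat, both with the product topology (Function_Topology);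
bool and nat carry discrete topologies.\<close>

definition nice :: "(nat \<Rightarrow> bool) set \<Rightarrow> bool" where
  "nice X \<longleftrightarrow>
     (\<forall>f :: (nat \<Rightarrow> bool) \<Rightarrow> (nat \<Rightarrow> nat). f \<in> borel_measurable borel \<longrightarrow>
        (\<exists>g :: nat \<Rightarrow> nat. \<forall>x\<in>X. infinite {n. f x n = g n}))"

end

theory Submission
  imports Defs "HOL-Library.Countable"
begin

lemma meas2:
  fixes a :: "'m \<Rightarrow> 'a::countable" and b :: "'m \<Rightarrow> 'b::countable"
  assumes "a \<in> measurable M (count_space UNIV)" "b \<in> measurable M (count_space UNIV)"
  shows "(\<lambda>x. h (a x) (b x) :: 'c) \<in> measurable M (count_space UNIV)"
proof -
  have "(\<lambda>x. h u (b x)) \<in> measurable M (count_space UNIV)" for u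
    using measurable_comp[OF assms(2) measurable_count_space[of "h u" UNIV]] by (simp add: comp_def)
  then show ?thesis using measurable_compose_countable[where f="\<lambda>u x. h u (b x)", OF _ assms(1)] by simp
qed

lemma coord_meas:
  fixes F :: "'m \<Rightarrow> nat \<Rightarrow> ('b::{countable,t2_space})"
  assumes "F \<in> borel_measurable M"
  shows "(\<lambda>x. F x n) \<in> measurable M (count_space UNIV)"
proof -
  have "(\<lambda>p. p n) \<in> borel_measurable (borel :: (nat \<Rightarrow> 'b) measure)"
    by (intro borel_measurable_continuous_onI continuous_on_product_coordinates)
  then have "(\<lambda>x. F x n) \<in> borel_measurable M"
    using measurable_comp[OF assms \<open>(\<lambda>p. p n) \<in> _\<close>] by (simp add: comp_def)
  then show ?thesis using measurable_cong_sets[OF refl sets_borel_eq_count_space] by blast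
qed

lemma fromcount:
  fixes F :: "'m \<Rightarrow> nat \<Rightarrow> nat"
  assumes "\<And>n. (\<lambda>x. F x n) \<in> measurable M (count_space UNIV)"
  shows "F \<in> borel_measurable M"
  apply (rule measurable_coordinatewise_then_product)
  using assms measurable_cong_sets[OF refl sets_borel_eq_count_space] by blast

lemma pair_parts:
  fixes A :: "'m \<Rightarrow> nat \<Rightarrow> bool" and B :: "'m \<Rightarrow> nat \<Rightarrow> nat"
  assumes "(\<lambda>x. (A x, B x)) \<in> borel_measurable M"
  shows "A \<in> borel_measurable M" "B \<in> borel_measurable M"
proof -
  have "fst \<in> borel_measurable (borel :: ((nat \<Rightarrow> bool) \<times> (nat \<Rightarrow> nat)) measure)"
    by (intro borel_measurable_continuous_onI continuous_on_fst continuous_on_id)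
  from measurable_comp[OF assms this] show "A \<in> borel_measurable M" by (simp add: comp_def)
  have "snd \<in> borel_measurable (borel :: ((nat \<Rightarrow> bool) \<times> (nat \<Rightarrow> nat)) measure)"
    by (intro borel_measurable_continuous_onI continuous_on_snd continuous_on_id)
  from measurable_comp[OF assms this] show "B \<in> borel_measurable M" by (simp add: comp_def)
qed


primrec enum :: "nat set \<Rightarrow> nat \<Rightarrow> nat" where
  "enum S 0 = (LEAST m. m \<in> S)"
| "enum S (Suc k) = (LEAST m. m \<in> S \<and> enum S k < m)"

lemma enum_props:
  assumes "infinite S"
  shows "enum S k \<in> S \<and> enum S k < enum S (Suc k)"
proof -
  have ex: "\<exists>m. m \<in> S \<and> a < m" for a
    using assms by (meson finite_nat_set_iff_bounded_le not_le)
  have "enum S k \<in> S" for k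
  proof (cases k)
    case 0 then show ?thesis using ex[of 0] by (auto intro: LeastI)
  next
    case (Suc j) then show ?thesis using LeastI_ex[OF ex[of "enum S j"]] by simp
  qed
  moreover have "enum S k < enum S (Suc k)"
    using LeastI_ex[OF ex[of "enum S k"]] by simp
  ultimately show ?thesis by blast
qed

lemma enum_mono: "infinite S \<Longrightarrow> strict_mono (enum S)"
  using enum_props by (metis strict_mono_Suc_iff)

lemma enum_meas:
  assumes "\<And>n. (\<lambda>x. n \<in> Y x) \<in> measurable M (count_space UNIV)"
  shows "(\<lambda>x. enum (Y x) k) \<in> measurable M (count_space UNIV)"
proof (induction k)
  case 0
  show ?case by (simp, rule measurable_Least, rule assms)
next
  case (Suc k)
  show ?case
    apply simp
    apply (rule measurable_Least)
    apply (rule meas2[where h="\<lambda>u v. u \<and> v < _", OF assms Suc])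
    done
qed

definition pick :: "(nat \<times> nat) list \<Rightarrow> nat list \<Rightarrow> nat \<times> nat" where
  "pick L P = (if \<exists>pv\<in>set L. fst pv \<notin> set P then SOME pv. pv \<in> set L \<and> fst pv \<notin> set P
     else (SOME pv. fst pv \<notin> set P))"

lemma pick_fresh: "fst (pick L P) \<notin> set P"
proof -
  have "\<exists>pv::nat\<times>nat. fst pv \<notin> set P"
    by (metis finite_set fst_conv infinite_UNIV_nat ex_new_if_finite)
  then show ?thesis unfolding pick_def
    by (smt (verit, ccfv_threshold) someI_ex)
qed

lemma pick_in:
  assumes "distinct (map fst L)" "length P < length L"
  shows "pick L P \<in> set L"
proof -
  have "card (set (map fst L)) = length L" using assms(1) distinct_card by fastforce
  moreover have "card (set P) \<le> length P" by (rule card_length)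
  ultimately have "\<not> set (map fst L) \<subseteq> set P"
    using assms(2) by (metis card_mono finite_set not_le order.strict_trans1)
  then have "\<exists>pv\<in>set L. fst pv \<notin> set P" by auto
  then show ?thesis unfolding pick_def
    by (smt (verit, ccfv_threshold) someI_ex)
qed

primrec cs :: "(nat \<Rightarrow> nat) \<Rightarrow> nat \<Rightarrow> (nat \<times> nat) list" where
  "cs G 0 = []"
| "cs G (Suc k) = cs G k @ [pick (from_nat (G k)) (map fst (cs G k))]"

definition cc :: "(nat \<Rightarrow> nat) \<Rightarrow> nat \<Rightarrow> nat \<times> nat" where
  "cc G k = pick (from_nat (G k)) (map fst (cs G k))"

lemma cs_eq: "cs G k = map (cc G) [0..<k]"
  by (induction k) (auto simp: cc_def)

lemma cc_inj: "inj (\<lambda>k. fst (cc G k))"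
proof -
  have "fst (cc G j) \<noteq> fst (cc G k)" if "j < k" for j k
  proof -
    have "fst (cc G k) \<notin> set (map fst (cs G k))" unfolding cc_def by (rule pick_fresh)
    moreover have "cc G j \<in> set (cs G k)" using that by (simp add: cs_eq)
    ultimately show ?thesis by (metis image_eqI list.set_map)
  qed
  then show ?thesis by (metis injI linorder_neqE_nat)
qed


theorem lemma2p5:
  fixes X :: "(nat \<Rightarrow> bool) set"
    and Y :: "(nat \<Rightarrow> bool) \<Rightarrow> nat set"
    and f :: "(nat \<Rightarrow> bool) \<Rightarrow> (nat \<Rightarrow> nat)"
  assumes "nice X"
    and "(\<lambda>x. (\<lambda>n. n \<in> Y x, f x)) \<in> borel_measurable borel"
    and "\<And>x. infinite (Y x)"
  shows "\<exists>g :: nat \<Rightarrow> nat. \<forall>x\<in>X. infinite {n \<in> Y x. f x n = g n}"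
proof -
  note AB = pair_parts[OF assms(2)]
  have Ym: "(\<lambda>x. n \<in> Y x) \<in> measurable borel (count_space UNIV)" for n
    using coord_meas[where F="\<lambda>x n. n \<in> Y x", OF AB(1), of n] by simp
  have fm: "(\<lambda>x. f x n) \<in> measurable borel (count_space UNIV)" for n
    using coord_meas[OF AB(2), of n] by simp
  note em = enum_meas[OF Ym]
  define Lst where "Lst x k = map (\<lambda>j. (enum (Y x) j, f x (enum (Y x) j))) [0..<Suc k]" for x k
  have pm: "(\<lambda>x. (enum (Y x) j, f x (enum (Y x) j))) \<in> measurable borel (count_space UNIV)" for j
  proof -
    have "(\<lambda>x. f x (enum (Y x) j)) \<in> measurable borel (count_space UNIV)"
      by (rule measurable_compose_countable[where f="\<lambda>m x. f x m", OF fm em])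
    then show ?thesis by (rule meas2[where h=Pair, OF em])
  qed
  have Lm: "(\<lambda>x. Lst x k) \<in> measurable borel (count_space UNIV)" for k
  proof (induction k)
    case 0
    have eq0: "(\<lambda>x. Lst x 0) = (\<lambda>x. [(enum (Y x) 0, f x (enum (Y x) 0))])" by (simp add: Lst_def)
    show ?case unfolding eq0 by (rule meas2[where h="\<lambda>u v. [u]", OF pm pm])
  next
    case (Suc k)
    have eqS: "(\<lambda>x. Lst x (Suc k)) = (\<lambda>x. Lst x k @ [(enum (Y x) (Suc k), f x (enum (Y x) (Suc k)))])"
      by (simp add: Lst_def)
    show ?case unfolding eqS by (rule meas2[where h="\<lambda>u v. u @ [v]", OF Suc pm])
  qed
  define F where "F x k = to_nat (Lst x k)" for x k
  have "F \<in> borel_measurable borel"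
    unfolding F_def by (rule fromcount, rule meas2[where h="\<lambda>u v. to_nat u", OF Lm Lm])
  then obtain G where G: "\<forall>x\<in>X. infinite {k. F x k = G k}"
    using assms(1) unfolding nice_def by blast
  define g where "g n = (if \<exists>k. fst (cc G k) = n then snd (cc G (SOME k. fst (cc G k) = n)) else 0)" for n
  have gk: "g (fst (cc G k)) = snd (cc G k)" for k
  proof -
    have "(SOME k'. fst (cc G k') = fst (cc G k)) = k"
      using cc_inj[of G] by (metis (mono_tags, lifting) injD someI_ex)
    then show ?thesis unfolding g_def by auto
  qed
  show ?thesis
  proof (intro exI ballI)
    fix x assume "x \<in> X"
    let ?K = "{k. F x k = G k}"
    have key: "fst (cc G k) \<in> {n \<in> Y x. f x n = g n}" if "k \<in> ?K" for k
    proof -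
      have "to_nat (Lst x k) = G k" using that by (simp add: F_def)
      then have "from_nat (G k) = Lst x k" using from_nat_to_nat by metis
      have sm: "strict_mono (enum (Y x))" by (rule enum_mono[OF assms(3)])
      have "map fst (Lst x k) = map (enum (Y x)) [0..<Suc k]" by (simp add: Lst_def)
      moreover have "distinct (map (enum (Y x)) [0..<Suc k])"
        using strict_mono_imp_inj_on[OF sm] by (simp only: distinct_map distinct_upt)
      ultimately have "distinct (map fst (Lst x k))" by simp
      moreover have "length (map fst (cs G k)) < length (Lst x k)"
        by (simp add: cs_eq Lst_def)
      ultimately have "cc G k \<in> set (Lst x k)"
        unfolding cc_def \<open>from_nat (G k) = Lst x k\<close> by (rule pick_in)
      then obtain j where j: "cc G k = (enum (Y x) j, f x (enum (Y x) j))"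
        unfolding Lst_def by auto
      show ?thesis using gk[of k] j enum_props[OF assms(3)] by auto
    qed
    have "infinite ((\<lambda>k. fst (cc G k)) ` ?K)"
      using G \<open>x \<in> X\<close> cc_inj[of G] by (metis finite_imageD inj_on_subset subset_UNIV)
    moreover have "(\<lambda>k. fst (cc G k)) ` ?K \<subseteq> {n \<in> Y x. f x n = g n}" using key by blast
    ultimately show "infinite {n \<in> Y x. f x n = g n}" using finite_subset by blast
  qed
qed

end
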